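(* Let $G=(V,E)$ be any $n$-vertex $d$-regular graph with girth at least $g$, and let $m\in\mathbb{N}$. For any map $\psi:V\to V$ with $\mathrm{rad}_G(\psi)<g/2-1$, we have $$\Pr_{v\sim V,\ u_1,\dots,u_m\sim N_G(v)}\left[|\psi(\{u_1,\dots,u_m\})|<m\right]<\frac{m^2}{\sqrt{d}},$$ where $v$ is uniform on $V$ and, given $v$, $u_1,\dots,u_m$ are i.i.d. uniform samples from $N_G(v)$.
   Context: $G$ is an undirected unweighted graph; $d_G$ denotes its shortest-path metric and $N_G(v)$ the set of neighbors of $v$. The girth of $G$ is the length of its shortest cycle. For $\psi:V\to V$, $\mathrm{rad}_G(\psi)=\max_{v\in V}d_G(v,\psi(v))$. *)

theory Defs
  imports "HOL-Library.FuncSet" "HOL-Library.Extended_Nat" Complex_Main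
begin

definition simple_graph :: "'a set \<Rightarrow> ('a \<Rightarrow> 'a \<Rightarrow> bool) \<Rightarrow> bool" where
  "simple_graph V E \<longleftrightarrow> (\<forall>x y. E x y \<longrightarrow> x \<in> V \<and> y \<in> V \<and> E y x \<and> x \<noteq> y)"

definition neighbors :: "'a set \<Rightarrow> ('a \<Rightarrow> 'a \<Rightarrow> bool) \<Rightarrow> 'a \<Rightarrow> 'a set" where
  "neighbors V E v = {u \<in> V. E v u}"

definition regular :: "'a set \<Rightarrow> ('a \<Rightarrow> 'a \<Rightarrow> bool) \<Rightarrow> nat \<Rightarrow> bool" where
  "regular V E d \<longleftrightarrow> (\<forall>v\<in>V. card (neighbors V E v) = d)"

definition is_walk :: "('a \<Rightarrow> 'a \<Rightarrow> bool) \<Rightarrow> 'a list \<Rightarrow> bool" where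
  "is_walk E xs \<longleftrightarrow> xs \<noteq> [] \<and> (\<forall>i. Suc i < length xs \<longrightarrow> E (xs ! i) (xs ! Suc i))"

text \<open>Shortest-path distance (infinite if no path exists).\<close>
definition gdist :: "('a \<Rightarrow> 'a \<Rightarrow> bool) \<Rightarrow> 'a \<Rightarrow> 'a \<Rightarrow> enat" where
  "gdist E u v = (INF xs \<in> {xs. is_walk E xs \<and> hd xs = u \<and> last xs = v}. enat (length xs - 1))"

definition is_cycle :: "('a \<Rightarrow> 'a \<Rightarrow> bool) \<Rightarrow> 'a list \<Rightarrow> bool" where
  "is_cycle E xs \<longleftrightarrow> length xs \<ge> 3 \<and> distinct xs \<and> is_walk E xs \<and> E (last xs) (hd xs)"

definition girth_ge :: "('a \<Rightarrow> 'a \<Rightarrow> bool) \<Rightarrow> nat \<Rightarrow> bool" where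
  "girth_ge E g \<longleftrightarrow> (\<forall>xs. is_cycle E xs \<longrightarrow> g \<le> length xs)"

definition rad_less :: "'a set \<Rightarrow> ('a \<Rightarrow> 'a \<Rightarrow> bool) \<Rightarrow> ('a \<Rightarrow> 'a) \<Rightarrow> real \<Rightarrow> bool" where
  "rad_less V E \<psi> r \<longleftrightarrow> (\<forall>v\<in>V. \<exists>k. gdist E v (\<psi> v) = enat k \<and> real k < r)"

text \<open>Pr over v uniform in V and u_0..u_(m-1) i.i.d. uniform in N(v) that
|psi({u_0,...,u_(m-1)})| < m, computed by counting.\<close>
definition collision_prob :: "'a set \<Rightarrow> ('a \<Rightarrow> 'a \<Rightarrow> bool) \<Rightarrow> ('a \<Rightarrow> 'a) \<Rightarrow> nat \<Rightarrow> real" where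
  "collision_prob V E \<psi> m =
     (\<Sum>v\<in>V. real (card {us \<in> {..<m} \<rightarrow>\<^sub>E neighbors V E v. card (\<psi> ` us ` {..<m}) < m})
               / real (card (neighbors V E v)) ^ m) / real (card V)"

end

theory Submission
  imports Defs
begin


lemma is_walk_single[simp]: "is_walk E [x]"
  by (simp add: is_walk_def)

lemma is_walk_Cons2[simp]: "is_walk E (x # y # xs) \<longleftrightarrow> E x y \<and> is_walk E (y # xs)"
  unfolding is_walk_def
proof safe
  fix i assume h: "\<forall>i. Suc i < length (x # y # xs) \<longrightarrow> E ((x # y # xs) ! i) ((x # y # xs) ! Suc i)"
    and "Suc i < length (y # xs)"
  then show "E ((y # xs) ! i) ((y # xs) ! Suc i)" using h[rule_format, of "Suc i"] by simp
next
  assume "\<forall>i. Suc i < length (x # y # xs) \<longrightarrow> E ((x # y # xs) ! i) ((x # y # xs) ! Suc i)"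
  then show "E x y" by (metis length_Cons nth_Cons_0 nth_Cons_Suc zero_less_Suc Suc_mono)
next
  fix i assume "E x y" "\<forall>i. Suc i < length (y # xs) \<longrightarrow> E ((y # xs) ! i) ((y # xs) ! Suc i)"
    "Suc i < length (x # y # xs)"
  then show "E ((x # y # xs) ! i) ((x # y # xs) ! Suc i)"
    by (cases i) auto
qed

lemma is_walk_Cons: "is_walk E (x # xs) \<longleftrightarrow> xs = [] \<or> (E x (hd xs) \<and> is_walk E xs)"
  by (cases xs) auto

lemma is_walk_append:
  "xs \<noteq> [] \<Longrightarrow> ys \<noteq> [] \<Longrightarrow> is_walk E (xs @ ys) \<longleftrightarrow> is_walk E xs \<and> is_walk E ys \<and> E (last xs) (hd ys)"
proof (induction xs)
  case Nil then show ?case by simp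
next
  case (Cons x xs)
  show ?case
  proof (cases xs)
    case Nil
    then show ?thesis using Cons by (cases ys) auto
  next
    case (Cons y zs)
    then show ?thesis using Cons.IH Cons.prems by auto
  qed
qed

lemma is_walk_rev:
  assumes sym: "\<And>x y. E x y \<Longrightarrow> E y x"
  shows "is_walk E xs \<Longrightarrow> is_walk E (rev xs)"
proof (induction xs)
  case Nil then show ?case by (simp add: is_walk_def)
next
  case (Cons x xs)
  show ?case
  proof (cases xs)
    case Nil then show ?thesis by simp
  next
    case (Cons y zs)
    then have "is_walk E (rev xs)" "E y x" using Cons.IH Cons.prems sym by auto
    then show ?thesis using Cons is_walk_append[of "rev zs @ [y]" "[x]" E] by simp
  qed
qed

definition shortest where
  "shortest E p u w \<longleftrightarrow> is_walk E p \<and> hd p = u \<and> last p = w \<and>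
     (\<forall>q. is_walk E q \<and> hd q = u \<and> last q = w \<longrightarrow> length p \<le> length q)"

lemma shortest_distinct:
  assumes "shortest E p u w" shows "distinct p"
proof (rule ccontr)
  assume "\<not> distinct p"
  then obtain a b c y where p: "p = a @ [y] @ b @ [y] @ c" using not_distinct_decomp by blast
  have w: "is_walk E p" using assms by (simp add: shortest_def)
  have wa: "a \<noteq> [] \<Longrightarrow> is_walk E a \<and> E (last a) y" using w p
    by (simp add: is_walk_append)
  have wc: "c \<noteq> [] \<Longrightarrow> is_walk E c \<and> E y (hd c)" using w p
    using is_walk_append[of "a @ [y] @ b @ [y]" c E] is_walk_append[of "[y]" c E]
    by (cases "c = []") (auto simp: is_walk_append)
  define q where "q = a @ [y] @ c"
  have "is_walk E q" unfolding q_def using wa wc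
    by (cases "a = []"; cases "c = []") (auto simp: is_walk_append is_walk_Cons)
  moreover have "hd q = u" using assms p unfolding q_def shortest_def
    by (cases a; simp)
  moreover have "last q = w" using assms p unfolding q_def shortest_def
    by (cases c rule: rev_cases; simp)
  ultimately have "length p \<le> length q" using assms by (simp add: shortest_def)
  then show False by (simp add: p q_def)
qed

lemma exists_shortest:
  assumes "gdist E u w = enat k"
  shows "\<exists>p. shortest E p u w \<and> length p - 1 = k"
proof -
  let ?S = "{xs. is_walk E xs \<and> hd xs = u \<and> last xs = w}"
  let ?I = "(\<lambda>xs. enat (length xs - 1)) ` ?S"
  have "?S \<noteq> {}"
  proof
    assume "?S = {}"
    then have "gdist E u w = \<infinity>" unfolding gdist_def by (subst \<open>?S = {}\<close>) (simp add: top_enat_def)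
    then show False using assms by simp
  qed
  then have "?I \<noteq> {}" by blast
  then have "Inf ?I \<in> ?I" unfolding Inf_enat_def by (auto intro: LeastI)
  then obtain p where p: "p \<in> ?S" "Inf ?I = enat (length p - 1)" by auto
  have "length p \<le> length q" if "q \<in> ?S" for q
  proof -
    have "Inf ?I \<le> enat (length q - 1)" using that by (auto intro: Inf_lower)
    moreover have "p \<noteq> []" "q \<noteq> []" using p that by (auto simp: is_walk_def)
    ultimately have "length p - 1 \<le> length q - 1" using p by simp
    moreover have "length p > 0" "length q > 0" using \<open>p \<noteq> []\<close> \<open>q \<noteq> []\<close> by auto
    ultimately show ?thesis by arith
  qed
  then show ?thesis using p assms unfolding shortest_def gdist_def by auto
qed

lemma sg_sym: "simple_graph V E \<Longrightarrow> E x y \<Longrightarrow> E y x"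
  by (simp add: simple_graph_def)
lemma sg_irr: "simple_graph V E \<Longrightarrow> E x y \<Longrightarrow> x \<noteq> y"
  by (simp add: simple_graph_def)

lemma notin_shortest:
  assumes sg: "simple_graph V E" and sp: "shortest E p u w" and e: "E v u" and p1: "p ! 1 \<noteq> v"
  shows "v \<notin> set p"
proof
  assume "v \<in> set p"
  then obtain a b where p: "p = a @ v # b" by (meson split_list)
  have w: "is_walk E p" "hd p = u" "last p = w" using sp by (auto simp: shortest_def)
  show False
  proof (cases a)
    case Nil
    then show False using w p e sg_irr[OF sg e] by simp
  next
    case (Cons z r)
    show False
    proof (cases r)
      case Nil
      then show False using p1 p Cons by simp
    next
      case (Cons z2 r2)
      define q where "q = u # v # b"
      have "is_walk E (v # b)" using w(1) p is_walk_append[of a "v # b" E] \<open>a = z # r\<close> by simp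
      then have "is_walk E q" unfolding q_def using sg_sym[OF sg e] by simp
      moreover have "hd q = u" "last q = w" using w p unfolding q_def by (auto simp: \<open>a = z # r\<close>)
      ultimately have "length p \<le> length q" using sp by (simp add: shortest_def)
      then show False using p \<open>a = z # r\<close> Cons unfolding q_def by simp
    qed
  qed
qed

lemma core:
  assumes sg: "simple_graph V E" and gir: "girth_ge E g"
    and e1: "E v u" and e2: "E v u'" and ne: "u \<noteq> u'"
    and sp: "shortest E p u w" and sp': "shortest E p' u' w"
    and p1: "p ! 1 \<noteq> v" and p1': "p' ! 1 \<noteq> v"
    and len: "length p + length p' < g"
  shows False
proof -
  have vp: "v \<notin> set p" using notin_shortest[OF sg sp e1 p1] .
  have vp': "v \<notin> set p'" using notin_shortest[OF sg sp' e2 p1'] .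
  have dp: "distinct p" and dp': "distinct p'" using shortest_distinct[OF sp] shortest_distinct[OF sp'] by auto
  have w: "is_walk E p" "hd p = u" "last p = w" using sp by (auto simp: shortest_def)
  have w': "is_walk E p'" "hd p' = u'" "last p' = w" using sp' by (auto simp: shortest_def)
  have "p \<noteq> []" "p' \<noteq> []" using w w' by (auto simp: is_walk_def)
  then have "w \<in> set p" "w \<in> set p'" using w(3) w'(3) last_in_set by metis+
  then obtain a x b where pab: "p = a @ x # b" and xin: "x \<in> set p'" and aout: "\<forall>y\<in>set a. y \<notin> set p'"
    using split_list_first_prop[of p "\<lambda>y. y \<in> set p'"] by blast
  obtain c e where pce: "p' = c @ x # e" using xin by (meson split_list)
  define C where "C = v # (a @ [x]) @ rev c"
  have wax: "is_walk E (a @ [x])"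
    using w(1) pab is_walk_append[of "a @ [x]" b E] by (cases "b = []") auto
  have hdax: "hd (a @ [x]) = u" using w(2) pab by (cases a) auto
  have wcx: "c \<noteq> [] \<Longrightarrow> is_walk E c \<and> E (last c) x"
    using w'(1) pce is_walk_append[of c "x # e" E] by auto
  have hdc: "c \<noteq> [] \<Longrightarrow> hd c = u'" using w'(2) pce by (cases c) auto
  have cnil: "c = [] \<Longrightarrow> x = u'" using w'(2) pce by simp
  have walkC: "is_walk E C"
  proof (cases "c = []")
    case True
    then show ?thesis unfolding C_def using wax hdax e1 by (simp add: is_walk_Cons)
  next
    case False
    have "is_walk E (rev c)" using wcx[OF False] is_walk_rev[of E c] sg_sym[OF sg] by blast
    moreover have "E x (hd (rev c))" using wcx[OF False] sg_sym[OF sg] False by (simp add: hd_rev)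
    ultimately have "is_walk E ((a @ [x]) @ rev c)" using wax False is_walk_append[of "a @ [x]" "rev c" E] by simp
    moreover have "hd ((a @ [x]) @ rev c) = u" using hdax by (cases a) auto
    ultimately show ?thesis unfolding C_def using e1 by (simp add: is_walk_Cons)
  qed
  have lastC: "E (last C) (hd C)"
  proof (cases "c = []")
    case True then show ?thesis unfolding C_def using cnil sg_sym[OF sg e2] by simp
  next
    case False then show ?thesis unfolding C_def using hdc sg_sym[OF sg e2] by (simp add: last_rev)
  qed
  have distC: "distinct C"
  proof -
    have "distinct (a @ [x])" using dp pab by simp
    moreover have "distinct (rev c)" using dp' pce by simp
    moreover have "set (a @ [x]) \<inter> set (rev c) = {}" using aout dp' pce by auto
    moreover have "v \<notin> set (a @ [x]) \<union> set (rev c)" using vp vp' pab pce by auto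
    ultimately show ?thesis unfolding C_def by auto
  qed
  have lenC: "length C \<ge> 3"
  proof (rule ccontr)
    assume "\<not> 3 \<le> length C"
    then have "a = []" "c = []" unfolding C_def by (auto simp: not_le)
    then show False using hdax cnil ne by simp
  qed
  have "is_cycle E C" using walkC lastC distC lenC by (simp add: is_cycle_def)
  then have "g \<le> length C" using gir by (simp add: girth_ge_def)
  moreover have "length C \<le> length p + length p'" unfolding C_def using pab pce by simp
  ultimately show False using len by simp
qed



lemma card_eq_coord:
  assumes fin: "finite N" and "i < m" "j < m" "i \<noteq> j"
  shows "card {us \<in> {..<m} \<rightarrow>\<^sub>E N. us i = us j} \<le> card N ^ (m - 1)"
proof -
  let ?S = "{us \<in> {..<m} \<rightarrow>\<^sub>E N. us i = us j}"
  let ?f = "\<lambda>us. restrict us ({..<m} - {i})"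
  have inj: "inj_on ?f ?S"
  proof (rule inj_onI)
    fix x y assume x: "x \<in> ?S" and y: "y \<in> ?S" and eq: "?f x = ?f y"
    show "x = y"
    proof
      fix k
      show "x k = y k"
      proof (cases "k < m")
        case True
        show ?thesis
        proof (cases "k = i")
          case True
          have "x j = y j" using fun_cong[OF eq, of j] assms(3,4) by (simp add: restrict_def)
          then show ?thesis using x y True by simp
        next
          case False
          then show ?thesis using fun_cong[OF eq, of k] \<open>k < m\<close> by simp
        qed
      next
        case False
        then show ?thesis using x y by (auto simp: PiE_def extensional_def)
      qed
    qed
  qed
  have sub: "?f ` ?S \<subseteq> ({..<m} - {i}) \<rightarrow>\<^sub>E N" by (auto simp: PiE_def Pi_def)
  have "card ?S = card (?f ` ?S)" using card_image[OF inj] by simp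
  also have "\<dots> \<le> card (({..<m} - {i}) \<rightarrow>\<^sub>E N)"
    by (rule card_mono[OF _ sub]) (simp add: finite_PiE fin)
  also have "\<dots> = card N ^ (m - 1)" using assms by (simp add: card_PiE)
  finally show ?thesis .
qed

lemma card_in_coord:
  assumes fin: "finite N" and C: "C \<subseteq> N" and i: "i < m"
  shows "card {us \<in> {..<m} \<rightarrow>\<^sub>E N. us i \<in> C} = card C * card N ^ (m - 1)"
proof -
  have "{us \<in> {..<m} \<rightarrow>\<^sub>E N. us i \<in> C} = PiE {..<m} (\<lambda>k. if k = i then C else N)"
    using C i by (auto simp: PiE_def Pi_def split: if_splits)
  moreover have "card (PiE {..<m} (\<lambda>k. if k = i then C else N)) = card C * card N ^ (m - 1)"
  proof -
    have "card (PiE {..<m} (\<lambda>k. if k = i then C else N)) = (\<Prod>k<m. card (if k = i then C else N))"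
      by (simp add: card_PiE)
    also have "\<dots> = card C * (\<Prod>k\<in>{..<m} - {i}. card N)"
      using i by (subst prod.remove[of _ i]) auto
    also have "\<dots> = card C * card N ^ (m - 1)" using i by simp
    finally show ?thesis .
  qed
  ultimately show ?thesis by simp
qed

lemma pigeon:
  assumes "card (\<psi> ` us ` {..<m}) < m"
  shows "\<exists>i<m. \<exists>j<i. \<psi> (us i) = \<psi> (us j)"
proof (rule ccontr)
  assume h: "\<not> ?thesis"
  have "inj_on (\<lambda>k. \<psi> (us k)) {..<m}"
  proof (rule inj_onI)
    fix k l assume "k \<in> {..<m}" "l \<in> {..<m}" "\<psi> (us k) = \<psi> (us l)"
    then show "k = l" using h by (metis lessThan_iff linorder_neqE_nat)
  qed
  then have "card ((\<lambda>k. \<psi> (us k)) ` {..<m}) = m" by (simp add: card_image)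
  then show False using assms by (simp add: image_image)
qed

lemma gauss2: "2 * (\<Sum>i<m. i) = m * (m - 1::nat)"
proof (induction m)
  case 0 then show ?case by simp
next
  case (Suc m) then show ?case by (cases m) (auto simp: algebra_simps)
qed



theorem lemma2:
  fixes V :: "'a set" and E :: "'a \<Rightarrow> 'a \<Rightarrow> bool" and \<psi> :: "'a \<Rightarrow> 'a"
    and n d g m :: nat
  assumes "simple_graph V E" and "finite V" and "card V = n" and "n > 0"
    and "regular V E d" and "d > 0"
    and "girth_ge E g"
    and "m \<ge> 1"
    and "\<psi> ` V \<subseteq> V"
    and "rad_less V E \<psi> (real g / 2 - 1)"
  shows "collision_prob V E \<psi> m < real m ^ 2 / sqrt (real d)"
proof -
  note sg = assms(1) and finV = assms(2) and gir = assms(7)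
  define Q where "Q u p \<longleftrightarrow> shortest E p u (\<psi> u) \<and> 2 * length p < g" for u p
  have exQ: "\<exists>p. Q u p" if uV: "u \<in> V" for u
  proof -
    obtain k where k: "gdist E u (\<psi> u) = enat k" "real k < real g / 2 - 1"
      using assms(10) uV by (auto simp: rad_less_def)
    obtain p where p: "shortest E p u (\<psi> u)" "length p - 1 = k" using exists_shortest[OF k(1)] by blast
    have "p \<noteq> []" using p by (auto simp: shortest_def is_walk_def)
    then have "2 * length p < g" using p k by (cases p) auto
    then show ?thesis using p Q_def by blast
  qed
  define P where "P u = (SOME p. Q u p)" for u
  have PQ: "Q u (P u)" if "u \<in> V" for u unfolding P_def using exQ[OF that] by (rule someI_ex)
  define R where "R u = P u ! 1" for u
  have key: "R u = v \<or> R u' = v" if "u \<in> V" "u' \<in> V" "E v u" "E v u'" "u \<noteq> u'" "\<psi> u = \<psi> u'" for u u' v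
  proof (rule ccontr)
    assume "\<not> (R u = v \<or> R u' = v)"
    then have "P u ! 1 \<noteq> v" "P u' ! 1 \<noteq> v" by (auto simp: R_def)
    moreover have "shortest E (P u) u (\<psi> u)" "shortest E (P u') u' (\<psi> u)"
      using PQ[OF that(1)] PQ[OF that(2)] that(6) by (auto simp: Q_def)
    moreover have "length (P u) + length (P u') < g" using PQ[OF that(1)] PQ[OF that(2)] by (auto simp: Q_def)
    ultimately show False using core[OF sg gir that(3,4,5)] by blast
  qed
  define N where "N v = neighbors V E v" for v
  define Cs where "Cs v = {u \<in> N v. R u = v}" for v
  define A where "A v = {us \<in> {..<m} \<rightarrow>\<^sub>E N v. card (\<psi> ` us ` {..<m}) < m}" for v
  define T where "T = (\<Sum>i<m. i)"
  have finN: "finite (N v)" for v using finV by (simp add: N_def neighbors_def)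
  have cardN: "card (N v) = d" if "v \<in> V" for v using assms(5) that by (simp add: regular_def N_def)
  have CsN: "Cs v \<subseteq> N v" for v by (auto simp: Cs_def)
  have per_v: "card (A v) \<le> (T + m * card (Cs v)) * d ^ (m - 1)" if v: "v \<in> V" for v
  proof -
    let ?S1 = "\<lambda>i j. {us \<in> {..<m} \<rightarrow>\<^sub>E N v. us i = us j}"
    let ?S2 = "\<lambda>i. {us \<in> {..<m} \<rightarrow>\<^sub>E N v. us i \<in> Cs v}"
    have sub: "A v \<subseteq> (\<Union>i<m. \<Union>j<i. ?S1 i j) \<union> (\<Union>i<m. ?S2 i)"
    proof
      fix us assume us: "us \<in> A v"
      then have pi: "us \<in> {..<m} \<rightarrow>\<^sub>E N v" by (simp add: A_def)
      have "card (\<psi> ` us ` {..<m}) < m" using us by (simp add: A_def)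
      from pigeon[OF this] obtain i j where ij: "i < m" "j < i" "\<psi> (us i) = \<psi> (us j)" by blast
      have jm: "j < m" using ij(1,2) by simp
      have inN: "us i \<in> N v" "us j \<in> N v"
        using PiE_mem[OF pi, of i] PiE_mem[OF pi, of j] ij(1) jm by simp_all
      show "us \<in> (\<Union>i<m. \<Union>j<i. ?S1 i j) \<union> (\<Union>i<m. ?S2 i)"
      proof (cases "us i = us j")
        case True
        then have "us \<in> ?S1 i j" using pi by simp
        then show ?thesis using ij by blast
      next
        case False
        have "R (us i) = v \<or> R (us j) = v"
          using key[of "us i" "us j" v] inN False ij(3) by (auto simp: N_def neighbors_def)
        then show ?thesis
        proof
          assume "R (us i) = v"
          then have "us \<in> ?S2 i" using pi inN by (simp add: Cs_def)
          then show ?thesis using ij by blast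
        next
          assume "R (us j) = v"
          then have "us \<in> ?S2 j" using pi inN by (simp add: Cs_def)
          then show ?thesis using jm by blast
        qed
      qed
    qed
    have fin: "finite ({..<m} \<rightarrow>\<^sub>E N v)" using finN by (simp add: finite_PiE)
    have "card (A v) \<le> card ((\<Union>i<m. \<Union>j<i. ?S1 i j) \<union> (\<Union>i<m. ?S2 i))"
    proof (rule card_mono[OF _ sub])
      show "finite ((\<Union>i<m. \<Union>j<i. ?S1 i j) \<union> (\<Union>i<m. ?S2 i))"
        by (rule finite_subset[OF _ fin]) blast
    qed
    also have "\<dots> \<le> card (\<Union>i<m. \<Union>j<i. ?S1 i j) + card (\<Union>i<m. ?S2 i)" by (rule card_Un_le)
    also have "card (\<Union>i<m. \<Union>j<i. ?S1 i j) \<le> (\<Sum>i<m. card (\<Union>j<i. ?S1 i j))" by (rule card_UN_le) simp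
    also have "\<dots> \<le> (\<Sum>i<m. \<Sum>j<i. card (?S1 i j))" by (intro sum_mono card_UN_le) simp
    also have "\<dots> \<le> (\<Sum>i<m. \<Sum>j<i. d ^ (m - 1))"
      by (intro sum_mono) (use card_eq_coord[OF finN] cardN[OF v] in auto)
    also have "\<dots> = T * d ^ (m - 1)" by (simp add: T_def sum_distrib_right)
    also have "card (\<Union>i<m. ?S2 i) \<le> (\<Sum>i<m. card (?S2 i))" by (rule card_UN_le) simp
    also have "\<dots> = (\<Sum>i<m. card (Cs v) * d ^ (m - 1))"
      by (intro sum.cong refl) (use card_in_coord[OF finN CsN] cardN[OF v] in auto)
    also have "\<dots> = m * card (Cs v) * d ^ (m - 1)" by simp
    finally show ?thesis by (simp add: algebra_simps)
  qed
  have sumC: "(\<Sum>v\<in>V. card (Cs v)) \<le> n"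
  proof -
    have "(\<Sum>v\<in>V. card (Cs v)) = card (\<Union>v\<in>V. Cs v)"
    proof (rule card_UN_disjoint[symmetric])
      show "finite V" by (rule finV)
      show "\<forall>i\<in>V. finite (Cs i)" using finite_subset[OF CsN finN] by blast
      show "\<forall>i\<in>V. \<forall>j\<in>V. i \<noteq> j \<longrightarrow> Cs i \<inter> Cs j = {}" by (auto simp: Cs_def)
    qed
    also have "\<dots> \<le> card V" by (rule card_mono[OF finV]) (auto simp: Cs_def N_def neighbors_def)
    finally show ?thesis using assms(3) by simp
  qed
  have cp: "collision_prob V E \<psi> m = (\<Sum>v\<in>V. real (card (A v)) / real d ^ m) / real n"
    unfolding collision_prob_def A_def N_def using cardN assms(3) by (simp add: N_def)
  show ?thesis
  proof (cases "m = 1")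
    case True
    have "A v = {}" for v using pigeon True by (fastforce simp: A_def)
    then have "collision_prob V E \<psi> m = 0" using cp by simp
    then show ?thesis using True assms(6) by simp
  next
    case False
    then have m2: "m \<ge> 2" using assms(8) by simp
    have dpos: "real d > 0" using assms(6) by simp
    have "(\<Sum>v\<in>V. real (card (A v)) / real d ^ m) \<le> (\<Sum>v\<in>V. (real T + real m * real (card (Cs v))) / real d)"
    proof (rule sum_mono)
      fix v assume v: "v \<in> V"
      have "real (card (A v)) \<le> (real T + real m * real (card (Cs v))) * real d ^ (m - 1)"
        using per_v[OF v] by (metis of_nat_add of_nat_le_iff of_nat_mult of_nat_power)
      moreover have "real d ^ m = real d * real d ^ (m - 1)" using assms(8)
        by (metis Suc_diff_le diff_Suc_1 power_Suc)
      ultimately show "real (card (A v)) / real d ^ m \<le> (real T + real m * real (card (Cs v))) / real d"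
        using dpos by (simp add: divide_simps)
    qed
    also have "\<dots> = (real n * real T + real m * (\<Sum>v\<in>V. real (card (Cs v)))) / real d"
      using assms(3) by (simp add: sum_divide_distrib[symmetric] sum.distrib sum_distrib_left)
    also have "\<dots> \<le> (real n * real T + real m * real n) / real d"
    proof -
      have "(\<Sum>v\<in>V. real (card (Cs v))) \<le> real n" using sumC by (metis of_nat_le_iff of_nat_sum)
      then show ?thesis using dpos by (intro divide_right_mono) (auto intro: mult_left_mono)
    qed
    finally have sle: "(\<Sum>v\<in>V. real (card (A v)) / real d ^ m) \<le> (real n * real T + real m * real n) / real d" .
    have npos: "real n > 0" using assms(4) by simp
    have "collision_prob V E \<psi> m \<le> ((real n * real T + real m * real n) / real d) / real n"
      unfolding cp by (rule divide_right_mono[OF sle]) (use npos in simp)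
    also have "\<dots> = (real T + real m) / real d" using npos dpos by (simp add: field_simps)
    finally have le: "collision_prob V E \<psi> m \<le> (real T + real m) / real d" .
    have "2 * real T = real m * (real m - 1)" using gauss2[of m] m2
      by (metis T_def of_nat_1 of_nat_diff of_nat_mult of_nat_numeral assms(8))
    moreover have "real m * real m \<ge> 2 * real m" using m2 by (intro mult_right_mono) auto
    moreover have "real m \<ge> 2" using m2 by simp
    ultimately have "real T + real m < real m ^ 2" unfolding power2_eq_square right_diff_distrib by linarith
    then have "(real T + real m) / real d < real m ^ 2 / real d" using dpos by (simp add: divide_strict_right_mono)
    also have "\<dots> \<le> real m ^ 2 / sqrt (real d)"
    proof -
      have "real d \<le> real d * real d" using assms(6) by (simp add: mult_le_cancel_left1)
      then have "sqrt (real d) \<le> sqrt (real d * real d)" by (rule real_sqrt_le_mono)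
      then have "sqrt (real d) \<le> real d" by simp
      then show ?thesis using dpos by (intro divide_left_mono) auto
    qed
    finally show ?thesis using le by simp
  qed
qed

end
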